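(* Let $U\subset\mathbb{R}^m$ be a bounded domain, $0\le k<n$, and $f\in W^{1,1}(U,\mathbb{R}^n)$. Suppose $$\inf_{\{f_j\}}\int_U\Big(\sup_j\big(|\Lambda^kf_j|+|\Lambda^{k+1}f_j|\big)\Big)\,dx<\infty,$$ where the infimum is over all sequences $\{f_j\}\subset C^1(U,\mathbb{R}^n)$ with $\|f_j-f\|_{W^{1,1}(U)}\to0$. Then $f$ is $k^\dagger$-stable.
   Context: For $f\in W^{1,1}(U,\mathbb{R}^n)$, $|\Lambda^kf|(x)$ is the maximum of the absolute values of all $k\times k$ minors of the Jacobian matrix $Df(x)=(\partial f_\nu/\partial x_\mu)$ ($0$ if $k>\min(m,n)$; $|\Lambda^0f|=1$). For $\alpha=\sum_{i_1<\dots<i_k}a_{i_1\dots i_k}(y)\,dy_{i_1}\wedge\dots\wedge dy_{i_k}$ on $\mathbb{R}^n$, $f^*\alpha=\sum a_{i_1\dots i_k}(f(x))\,df_{i_1}\wedge\dots\wedge df_{i_k}$, $df_\nu=\sum_\mu\frac{\partial f_\nu}{\partial x_\mu}dx_\mu$. $C^1_b(\mathbb{R}^n,\Lambda^k)$: $C^1$ $k$-forms on $\mathbb{R}^n$ with bounded coefficients and bounded first derivatives of coefficients; $C^1_0(U,\Lambda^j)$: $C^1$ forms on $U$ with compactly supported coefficients. $\mathcal{F}^k(U,\mathbb{R}^n)=\{f\in W^{1,1}(U,\mathbb{R}^n): |\Lambda^kf|\in L^1(U)\}$. A sequence $f_j\in\mathcal{F}^k$ converges to $f\in\mathcal{F}^k$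 in the $\tau^k$ topology if $f_j\to f$ in $W^{1,1}$ and $\int_Uf_j^*\alpha\wedge\omega\to\int_Uf^*\alpha\wedge\omega$ for all $\alpha\in C^1_b(\mathbb{R}^n,\Lambda^k)$, $\omega\in C^1_0(U,\Lambda^{m-k})$. For $k<n$, a map $f$ is $k^\dagger$-stable if $f\in\mathcal{F}^k(U,\mathbb{R}^n)\cap\mathcal{F}^{k+1}(U,\mathbb{R}^n)$ and there is a single sequence $f_j\in C^1(U,\mathbb{R}^n)\cap\mathcal{F}^k\cap\mathcal{F}^{k+1}$ converging to $f$ both in the $\tau^k$ topology and in the $\tau^{k+1}$ topology; for $k=n$, $n^\dagger$-stable means $n$-stable (there is a sequence in $C^1(U,\mathbb{R}^n)\cap\mathcal{F}^n$ converging to $f\in\mathcal{F}^n$ in $\tau^n$). *)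

theory Defs
  imports "HOL-Analysis.Analysis"
begin

definition C1_on :: "'a::real_normed_vector set \<Rightarrow> ('a \<Rightarrow> 'b::real_normed_vector) \<Rightarrow> bool" where
  "C1_on S g \<longleftrightarrow> (\<exists>D. (\<forall>x\<in>S. (g has_derivative blinfun_apply (D x)) (at x)) \<and> continuous_on S D)"

definition C1c_on :: "'a::real_normed_vector set \<Rightarrow> ('a \<Rightarrow> real) \<Rightarrow> bool" where
  "C1c_on S g \<longleftrightarrow> C1_on S g \<and> (\<exists>K. compact K \<and> K \<subseteq> S \<and> (\<forall>x\<in>S - K. g x = 0))"

text \<open>D x $ nu $ mu is the weak partial derivative of f_nu with respect to x_mu.\<close>
definition weak_jacobian :: "(real^'m) set \<Rightarrow> (real^'m \<Rightarrow> real^'n) \<Rightarrow> (real^'m \<Rightarrow> real^'m^'n) \<Rightarrow> bool" where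
  "weak_jacobian U f D \<longleftrightarrow>
     (\<forall>\<nu>. set_integrable lebesgue U (\<lambda>x. f x $ \<nu>)) \<and>
     (\<forall>\<nu> \<mu>. set_integrable lebesgue U (\<lambda>x. D x $ \<nu> $ \<mu>)) \<and>
     (\<forall>\<phi> D\<phi>. (\<forall>x\<in>U. (\<phi> has_derivative blinfun_apply (D\<phi> x)) (at x)) \<and> continuous_on U D\<phi> \<and>
          (\<exists>K. compact K \<and> K \<subseteq> U \<and> (\<forall>x\<in>U - K. \<phi> x = 0)) \<longrightarrow>
        (\<forall>\<nu> \<mu>. (LINT x:U|lebesgue. f x $ \<nu> * D\<phi> x (axis \<mu> 1))
               = - (LINT x:U|lebesgue. D x $ \<nu> $ \<mu> * \<phi> x)))"

definition W11 :: "(real^'m) set \<Rightarrow> (real^'m \<Rightarrow> real^'n) \<Rightarrow> bool" where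
  "W11 U f \<longleftrightarrow> (\<exists>D. weak_jacobian U f D)"

definition wjac :: "(real^'m) set \<Rightarrow> (real^'m \<Rightarrow> real^'n) \<Rightarrow> real^'m \<Rightarrow> real^'m^'n" where
  "wjac U f = (SOME D. weak_jacobian U f D)"

definition W11_conv :: "(real^'m) set \<Rightarrow> (nat \<Rightarrow> real^'m \<Rightarrow> real^'n) \<Rightarrow> (real^'m \<Rightarrow> real^'n) \<Rightarrow> bool" where
  "W11_conv U fs f \<longleftrightarrow> W11 U f \<and> (\<forall>j. W11 U (fs j)) \<and>
     (\<lambda>j. LINT x:U|lebesgue. norm (fs j x - f x) + norm (wjac U (fs j) x - wjac U f x)) \<longlonglongrightarrow> 0"

definition det_nat :: "nat \<Rightarrow> (nat \<Rightarrow> nat \<Rightarrow> real) \<Rightarrow> real" where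
  "det_nat k M = (\<Sum>p | p permutes {0..<k}. of_int (sign p) * (\<Prod>i<k. M i (p i)))"

text \<open>|\<Lambda>^k| of a matrix A (rows indexed by 'n, columns by 'm): max of |k x k minors|, 0 if none.\<close>
definition lam :: "nat \<Rightarrow> real^'m^'n \<Rightarrow> real" where
  "lam k A = (let S = {\<bar>det_nat k (\<lambda>i j. A $ r i $ c j)\<bar> | r c.
                  r \<in> {0..<k} \<rightarrow>\<^sub>E UNIV \<and> c \<in> {0..<k} \<rightarrow>\<^sub>E UNIV \<and>
                  inj_on r {0..<k} \<and> inj_on c {0..<k}}
              in if S = {} then 0 else Max S)"

definition Fk :: "nat \<Rightarrow> (real^'m) set \<Rightarrow> (real^'m \<Rightarrow> real^'n) \<Rightarrow> bool" where
  "Fk k U f \<longleftrightarrow> W11 U f \<and> set_integrable lebesgue U (\<lambda>x. lam k (wjac U f x))"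

text \<open>A form at a point: coefficient function on index sets; the coefficient at I
  is the coefficient of dx_{i_1} \<and> ... \<and> dx_{i_p}, i_1 < ... < i_p the elements of I.\<close>

definition shuffle_sign :: "('a::linorder) set \<Rightarrow> 'a set \<Rightarrow> real" where
  "shuffle_sign J K = (-1) ^ card {(j, k). j \<in> J \<and> k \<in> K \<and> k < j}"

definition wedge :: "(('a::{finite,linorder}) set \<Rightarrow> real) \<Rightarrow> ('a set \<Rightarrow> real) \<Rightarrow> ('a set \<Rightarrow> real)" where
  "wedge \<alpha> \<beta> L = (\<Sum>J | J \<subseteq> L. shuffle_sign J (L - J) * \<alpha> J * \<beta> (L - J))"

definition form_one :: "'a set \<Rightarrow> real" where
  "form_one J = (if J = {} then 1 else 0)"

text \<open>df_nu = sum_mu (\<partial>f_nu/\<partial>x_mu) dx_mu, for a Jacobian matrix A at a point.\<close>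
definition dcomp :: "real^'m^'n \<Rightarrow> 'n \<Rightarrow> ('m set \<Rightarrow> real)" where
  "dcomp A \<nu> J = (if \<exists>\<mu>. J = {\<mu>} then A $ \<nu> $ (THE \<mu>. J = {\<mu>}) else 0)"

text \<open>Pullback f^*\<alpha> at x of the k-form with coefficients a I (card I = k), given Jacobian D.\<close>
definition pullback :: "nat \<Rightarrow> (('n::{finite,linorder}) set \<Rightarrow> (real,'n) vec \<Rightarrow> real) \<Rightarrow>
     ((real,'m::{finite,linorder}) vec \<Rightarrow> (real,'n) vec) \<Rightarrow> ((real,'m) vec \<Rightarrow> ((real,'m) vec,'n) vec) \<Rightarrow> (real,'m) vec \<Rightarrow> ('m set \<Rightarrow> real)" where
  "pullback k a f D x L = (\<Sum>I | card I = k. a I (f x) *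
        foldr (\<lambda>i acc. wedge (dcomp (D x) i) acc) (sorted_list_of_set I) form_one L)"

definition hom_form :: "nat \<Rightarrow> ('m set \<Rightarrow> 'p \<Rightarrow> real) \<Rightarrow> 'p \<Rightarrow> ('m set \<Rightarrow> real)" where
  "hom_form p w x K = (if card K = p then w K x else 0)"

text \<open>\<integral>_U f^*\<alpha> \<and> \<omega>: integral of the coefficient of dx_1 \<and> ... \<and> dx_m.\<close>
definition pair_integral :: "nat \<Rightarrow> ((real,'m::{finite,linorder}) vec) set \<Rightarrow> (('n::{finite,linorder}) set \<Rightarrow> (real,'n) vec \<Rightarrow> real) \<Rightarrow>
     ('m set \<Rightarrow> (real,'m) vec \<Rightarrow> real) \<Rightarrow> ((real,'m) vec \<Rightarrow> (real,'n) vec) \<Rightarrow> real" where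
  "pair_integral k U a w f = (LINT x:U|lebesgue.
      wedge (pullback k a f (wjac U f) x) (hom_form (CARD('m) - k) w x) UNIV)"

definition C1b_form :: "nat \<Rightarrow> ('n::{finite,linorder} set \<Rightarrow> (real,'n) vec \<Rightarrow> real) \<Rightarrow> bool" where
  "C1b_form k a \<longleftrightarrow> (\<forall>I. card I = k \<longrightarrow>
      bounded (range (a I)) \<and>
      (\<exists>D. (\<forall>y. (a I has_derivative blinfun_apply (D y)) (at y)) \<and> continuous_on UNIV D \<and> bounded (range D)))"

definition C10_form :: "nat \<Rightarrow> ((real,'m::{finite,linorder}) vec) set \<Rightarrow> ('m set \<Rightarrow> (real,'m) vec \<Rightarrow> real) \<Rightarrow> bool" where
  "C10_form p U w \<longleftrightarrow> (\<forall>K. card K = p \<longrightarrow> C1c_on U (w K))"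

definition tau_conv :: "nat \<Rightarrow> ((real,'m::{finite,linorder}) vec) set \<Rightarrow> (nat \<Rightarrow> (real,'m) vec \<Rightarrow> (real,'n::{finite,linorder}) vec) \<Rightarrow> ((real,'m) vec \<Rightarrow> (real,'n) vec) \<Rightarrow> bool" where
  "tau_conv k U fs f \<longleftrightarrow> Fk k U f \<and> (\<forall>j. Fk k U (fs j)) \<and> W11_conv U fs f \<and>
     (\<forall>a w. C1b_form k a \<and> C10_form (CARD('m) - k) U w \<longrightarrow>
        (\<lambda>j. pair_integral k U a w (fs j)) \<longlonglongrightarrow> pair_integral k U a w f)"

definition k_stable :: "nat \<Rightarrow> ((real,'m::{finite,linorder}) vec) set \<Rightarrow> ((real,'m) vec \<Rightarrow> (real,'n::{finite,linorder}) vec) \<Rightarrow> bool" where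
  "k_stable k U f \<longleftrightarrow> Fk k U f \<and> (\<exists>fs. (\<forall>j. C1_on U (fs j) \<and> Fk k U (fs j)) \<and> tau_conv k U fs f)"

definition dagger_stable :: "nat \<Rightarrow> ((real,'m::{finite,linorder}) vec) set \<Rightarrow> ((real,'m) vec \<Rightarrow> (real,'n::{finite,linorder}) vec) \<Rightarrow> bool" where
  "dagger_stable k U f \<longleftrightarrow>
     (if k < CARD('n) then
        Fk k U f \<and> Fk (Suc k) U f \<and>
        (\<exists>fs. (\<forall>j. C1_on U (fs j) \<and> Fk k U (fs j) \<and> Fk (Suc k) U (fs j)) \<and>
              tau_conv k U fs f \<and> tau_conv (Suc k) U fs f)
      else k_stable k U f)"

end

theory Submission
  imports Defs
begin


definition rho :: "nat \<Rightarrow> nat \<Rightarrow> nat" where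
  "rho b = (\<lambda>x. if x = 0 then b else if x \<le> b then x - 1 else x)"

lemma rho_0: "rho 0 = id" by (auto simp: rho_def fun_eq_iff)

lemma rho_Suc: "rho (Suc b) = Transposition.transpose b (Suc b) \<circ> rho b"
  by (auto simp: rho_def fun_eq_iff Transposition.transpose_def)

lemma rho_perm: "permutation (rho b) \<and> sign (rho b) = (-1)^b"
proof (induction b)
  case 0 thus ?case by (simp add: rho_0 permutation_id)
next
  case (Suc b)
  have "permutation (Transposition.transpose b (Suc b) \<circ> rho b)"
    using Suc by (intro permutation_compose permutation_swap_id) simp
  moreover have "sign (Transposition.transpose b (Suc b) \<circ> rho b) = (-1)^Suc b"
    using Suc sign_compose[OF permutation_swap_id, of "rho b" b "Suc b"] sign_swap_id[of b "Suc b"] by simp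
  ultimately show ?case unfolding rho_Suc by (rule conjI)
qed

lemma rho_permutes: "b < n \<Longrightarrow> rho b permutes {0..<n}"
proof (induction b)
  case 0 show ?case unfolding rho_0 by (rule permutes_id)
next
  case (Suc b)
  have "Transposition.transpose b (Suc b) permutes {0..<n}"
    using Suc.prems by (intro permutes_swap_id) auto
  then show ?case unfolding rho_Suc using Suc by (intro permutes_compose) auto
qed

definition shiftp :: "nat \<Rightarrow> (nat \<Rightarrow> nat) \<Rightarrow> nat \<Rightarrow> nat" where
  "shiftp p q = (\<lambda>x. if x \<in> {1..<Suc p} then Suc (q (x - 1)) else x)"

lemma shiftp_props:
  assumes "q permutes {0..<p}"
  shows "shiftp p q permutes {1..<Suc p}" "sign (shiftp p q) = sign q"
proof -
  have B: "permutes_bij q {0..<p} {1..<Suc p} Suc (\<lambda>x. x - 1)"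
    unfolding permutes_bij_def bij_betw_def using assms by (simp add: image_Suc_atLeastLessThan)
  have F: "permutes_bij_finite q {0..<p} {1..<Suc p} Suc (\<lambda>x. x - 1)"
    unfolding permutes_bij_finite_def permutes_bij_finite_axioms_def using B by simp
  show "shiftp p q permutes {1..<Suc p}" using permutes_bij.permutes_p'[OF B] unfolding shiftp_def .
  show "sign (shiftp p q) = sign q" using permutes_bij_finite.sign_p'[OF F] unfolding shiftp_def .
qed

definition comb :: "nat \<Rightarrow> nat \<Rightarrow> (nat \<Rightarrow> nat) \<Rightarrow> nat \<Rightarrow> nat" where
  "comb p b q = rho b \<circ> shiftp p q"

lemma comb_0: "comb p b q 0 = b" by (simp add: comb_def shiftp_def rho_def)
lemma comb_Suc: "i < p \<Longrightarrow> comb p b q (Suc i) = (if q i < b then q i else Suc (q i))"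
  by (simp add: comb_def shiftp_def rho_def)

lemma comb_props:
  assumes "q permutes {0..<p}" "b < Suc p"
  shows "comb p b q permutes {0..<Suc p}" "sign (comb p b q) = (-1)^b * sign q"
proof -
  have "shiftp p q permutes {0..<Suc p}"
    using shiftp_props(1)[OF assms(1)] by (rule permutes_subset) auto
  then show "comb p b q permutes {0..<Suc p}" unfolding comb_def
    by (intro permutes_compose rho_permutes assms(2))
  show "sign (comb p b q) = (-1)^b * sign q" unfolding comb_def
    using sign_compose[of "rho b" "shiftp p q"] rho_perm[of b] shiftp_props[OF assms(1)]
      permutes_imp_permutation[OF _ shiftp_props(1)[OF assms(1)]] by simp
qed

definition inv_comb :: "nat \<Rightarrow> (nat \<Rightarrow> nat) \<Rightarrow> nat \<times> (nat \<Rightarrow> nat)" where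
  "inv_comb p q = (q 0, \<lambda>i. if i < p then (if q (Suc i) < q 0 then q (Suc i) else q (Suc i) - 1) else i)"

lemma inv_comb_permutes:
  assumes q: "q permutes {0..<Suc p}"
  shows "snd (inv_comb p q) permutes {0..<p}" "fst (inv_comb p q) < Suc p"
    "comb p (fst (inv_comb p q)) (snd (inv_comb p q)) = q"
proof -
  define q' where "q' = snd (inv_comb p q)"
  have qin: "\<And>x. x < Suc p \<Longrightarrow> q x < Suc p" using permutes_in_image[OF q] by simp
  have qinj: "\<And>x y. q x = q y \<Longrightarrow> x = y" using permutes_inj[OF q] by (simp add: inj_eq)
  have inj: "inj_on q' {0..<p}"
  proof (rule inj_onI)
    fix x y assume xy: "x \<in> {0..<p}" "y \<in> {0..<p}" "q' x = q' y"
    have "q (Suc x) \<noteq> q 0" "q (Suc y) \<noteq> q 0" using qinj by blast+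
    then have "q (Suc x) = q (Suc y)" using xy unfolding q'_def inv_comb_def
      by (auto split: if_splits)
    then show "x = y" using qinj by blast
  qed
  have img: "q' ` {0..<p} \<subseteq> {0..<p}"
  proof
    fix y assume "y \<in> q' ` {0..<p}"
    then obtain x where x: "x < p" "y = q' x" by auto
    have "q (Suc x) \<noteq> q 0" using qinj by blast
    moreover have "q (Suc x) < Suc p" "q 0 < Suc p" using qin x by auto
    ultimately show "y \<in> {0..<p}" using x unfolding q'_def inv_comb_def by auto
  qed
  have "q' ` {0..<p} = {0..<p}" using endo_inj_surj[OF _ img inj] by simp
  then have "bij_betw q' {0..<p} {0..<p}" using inj by (simp add: bij_betw_def)
  moreover have "\<And>x. x \<notin> {0..<p} \<Longrightarrow> q' x = x" unfolding q'_def inv_comb_def by simp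
  ultimately show "snd (inv_comb p q) permutes {0..<p}" unfolding q'_def[symmetric]
    by (rule bij_imp_permutes)
  show "fst (inv_comb p q) < Suc p" using qin by (simp add: inv_comb_def)
  show "comb p (fst (inv_comb p q)) (snd (inv_comb p q)) = q"
  proof
    fix x
    show "comb p (fst (inv_comb p q)) (snd (inv_comb p q)) x = q x"
    proof (cases x)
      case 0 then show ?thesis by (simp add: comb_0 inv_comb_def)
    next
      case (Suc i)
      show ?thesis
      proof (cases "i < p")
        case True
        have "q (Suc i) \<noteq> q 0" using qinj by blast
        then show ?thesis using True Suc by (auto simp: comb_Suc inv_comb_def)
      next
        case False
        have "q x = x" using permutes_not_in[OF q] False Suc by simp
        moreover have "q 0 < Suc p" using qin by simp
        ultimately show ?thesis using False Suc
          by (simp add: comb_def shiftp_def rho_def inv_comb_def)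
      qed
    qed
  qed
qed

lemma inv_comb_comb:
  assumes "q permutes {0..<p}" "b < Suc p"
  shows "inv_comb p (comb p b q) = (b, q)"
proof -
  have "(\<lambda>i. if i < p then (if comb p b q (Suc i) < comb p b q 0 then comb p b q (Suc i)
          else comb p b q (Suc i) - 1) else i) = q"
  proof
    fix i show "(if i < p then (if comb p b q (Suc i) < comb p b q 0 then comb p b q (Suc i)
          else comb p b q (Suc i) - 1) else i) = q i"
      using permutes_not_in[OF assms(1), of i] by (auto simp: comb_Suc comb_0)
  qed
  then show ?thesis by (simp add: inv_comb_def comb_0)
qed

lemma det_nat_Suc:
  "det_nat (Suc p) M = (\<Sum>b<Suc p. (-1)^b * M 0 b *
      det_nat p (\<lambda>i j. M (Suc i) (if j < b then j else Suc j)))"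
proof -
  let ?P = "\<lambda>n. {q. q permutes {0..<n}}"
  let ?g = "\<lambda>q. of_int (sign q) * (\<Prod>i<Suc p. M i (q i))"
  let ?h = "\<lambda>(b, q). (-1)^b * M 0 b *
      (of_int (sign q) * (\<Prod>i<p. M (Suc i) (if q i < b then q i else Suc (q i))))"
  have "det_nat (Suc p) M = sum ?g (?P (Suc p))" by (simp add: det_nat_def)
  also have "\<dots> = sum ?h ({..<Suc p} \<times> ?P p)"
  proof (rule sum.reindex_bij_witness[where i = "\<lambda>(b, q). comb p b q" and j = "inv_comb p"])
    fix a assume "a \<in> ?P (Suc p)"
    then show "(case inv_comb p a of (b, q) \<Rightarrow> comb p b q) = a"
      "inv_comb p a \<in> {..<Suc p} \<times> ?P p"
      using inv_comb_permutes[of a p] by (auto split: prod.splits simp: mem_Times_iff)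
  next
    fix bq assume "bq \<in> {..<Suc p} \<times> ?P p"
    then obtain b q where bq: "bq = (b, q)" "b < Suc p" "q permutes {0..<p}" by auto
    show "inv_comb p (case bq of (b, q) \<Rightarrow> comb p b q) = bq"
      using inv_comb_comb bq by simp
    show "(case bq of (b, q) \<Rightarrow> comb p b q) \<in> ?P (Suc p)" using comb_props bq by simp
  next
    fix a assume a: "a \<in> ?P (Suc p)"
    obtain b q where bq: "inv_comb p a = (b, q)" by (cases "inv_comb p a")
    have q: "q permutes {0..<p}" "b < Suc p" "comb p b q = a"
      using inv_comb_permutes[of a p] a bq by auto
    have "?g a = of_int (sign a) * (M 0 (a 0) * (\<Prod>i<p. M (Suc i) (a (Suc i))))"
      by (simp only: prod.lessThan_Suc_shift)
    also have "\<dots> = ?h (b, q)"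
      using q comb_props[OF q(1,2)] by (auto simp: comb_0 comb_Suc intro!: prod.cong)
    finally show "?h (inv_comb p a) = ?g a" using bq by simp
  qed
  also have "\<dots> = (\<Sum>b<Suc p. \<Sum>q\<in>?P p. ?h (b, q))"
    by (subst sum.cartesian_product) (simp add: case_prod_beta)
  also have "\<dots> = (\<Sum>b<Suc p. (-1)^b * M 0 b *
      det_nat p (\<lambda>i j. M (Suc i) (if j < b then j else Suc j)))"
    by (simp add: det_nat_def sum_distrib_left)
  finally show ?thesis .
qed

lemma det_nat_cong:
  assumes "\<And>a c. a < n \<Longrightarrow> c < n \<Longrightarrow> M a c = M' a c"
  shows "det_nat n M = det_nat n M'"
  unfolding det_nat_def
proof (rule sum.cong[OF refl], rule arg_cong[where f = "\<lambda>x. _ * x"], rule prod.cong[OF refl])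
  fix q i assume "q \<in> {q. q permutes {0..<n}}" "i \<in> {..<n}"
  then show "M i (q i) = M' i (q i)" using assms permutes_in_image[of q "{0..<n}" i] by auto
qed

lemma det_nat_0: "det_nat 0 M = 1"
  by (simp add: det_nat_def permutes_empty)

lemma remove1_nth:
  assumes "distinct ls" "b < length ls"
  shows "remove1 (ls ! b) ls = take b ls @ drop (Suc b) ls"
proof -
  have ls: "ls = take b ls @ ls ! b # drop (Suc b) ls" using id_take_nth_drop[OF assms(2)] .
  have "ls ! b \<notin> set (take b ls)"
  proof
    assume "ls ! b \<in> set (take b ls)"
    then obtain c where c: "c < length (take b ls)" "take b ls ! c = ls ! b"
      by (auto simp: in_set_conv_nth)
    then have "ls ! c = ls ! b" "c < b" "c < length ls" using assms by auto
    then show False using nth_eq_iff_index_eq[OF assms(1) \<open>c < length ls\<close> assms(2)] by simp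
  qed
  then have "remove1 (ls ! b) (take b ls @ ls ! b # drop (Suc b) ls) = take b ls @ drop (Suc b) ls"
    by (simp add: remove1_append)
  then show ?thesis using ls by metis
qed

lemma sorted_remove_nth:
  fixes L :: "'a::linorder set"
  assumes "finite L" "b < card L" "c < card L - 1"
  shows "sorted_list_of_set (L - {sorted_list_of_set L ! b}) ! c =
         sorted_list_of_set L ! (if c < b then c else Suc c)"
proof -
  let ?ls = "sorted_list_of_set L"
  have len: "length ?ls = card L" by simp
  have "sorted_list_of_set (L - {?ls ! b}) = remove1 (?ls ! b) ?ls"
    using assms(1) by (intro sorted_list_of_set_remove) auto
  also have "\<dots> = take b ?ls @ drop (Suc b) ?ls"
    using assms by (intro remove1_nth) auto
  finally show ?thesis using assms by (auto simp: nth_append min_def)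
qed

lemma card_less_nth:
  fixes L :: "'a::linorder set"
  assumes "finite L" "b < card L"
  shows "card {k \<in> L. k < sorted_list_of_set L ! b} = b"
proof -
  let ?ls = "sorted_list_of_set L"
  have sw: "sorted_wrt (<) ?ls" by simp
  have so: "sorted ?ls" by simp
  have "{k \<in> L. k < ?ls ! b} = (!) ?ls ` {..<b}"
  proof (intro equalityI subsetI)
    fix k assume "k \<in> {k \<in> L. k < ?ls ! b}"
    then have k: "k \<in> L" "k < ?ls ! b" by auto
    then obtain c where c: "c < length ?ls" "k = ?ls ! c"
      using assms(1) by (metis in_set_conv_nth set_sorted_list_of_set)
    have "c < b"
    proof (rule ccontr)
      assume "\<not> c < b"
      then have "?ls ! b \<le> ?ls ! c" using sorted_nth_mono[OF so, of b c] c by simp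
      then show False using k c by simp
    qed
    then show "k \<in> (!) ?ls ` {..<b}" using c by auto
  next
    fix k assume "k \<in> (!) ?ls ` {..<b}"
    then obtain c where c: "c < b" "k = ?ls ! c" by auto
    then have "c < length ?ls" using assms by simp
    then have "?ls ! c \<in> L" using assms nth_mem[of c ?ls] by simp
    moreover have "?ls ! c < ?ls ! b" using assms c sorted_wrt_nth_less[OF sw, of c b] by simp
    ultimately show "k \<in> {k \<in> L. k < ?ls ! b}" using c by simp
  qed
  moreover have "inj_on ((!) ?ls) {..<b}"
    using assms by (intro inj_on_nth) auto
  ultimately show ?thesis by (simp add: card_image)
qed

definition Fw :: "real^('m::{finite,linorder})^'n \<Rightarrow> 'n list \<Rightarrow> 'm set \<Rightarrow> real" where
  "Fw A xs = foldr (\<lambda>i acc. wedge (dcomp A i) acc) xs form_one"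

lemma wedge_dcomp:
  fixes A :: "real^'m::{finite,linorder}^'n"
  shows "wedge (dcomp A i) \<beta> L = (\<Sum>\<mu>\<in>L. shuffle_sign {\<mu>} (L - {\<mu>}) * A $ i $ \<mu> * \<beta> (L - {\<mu>}))"
proof -
  let ?t = "\<lambda>J. shuffle_sign J (L - J) * dcomp A i J * \<beta> (L - J)"
  have "wedge (dcomp A i) \<beta> L = sum ?t {J. J \<subseteq> L}" by (simp add: wedge_def)
  also have "\<dots> = sum ?t ((\<lambda>\<mu>. {\<mu>}) ` L)"
    by (rule sum.mono_neutral_right) (auto simp: dcomp_def)
  also have "\<dots> = (\<Sum>\<mu>\<in>L. ?t {\<mu>})"
    by (subst sum.reindex) (auto simp: inj_on_def)
  finally show ?thesis by (simp add: dcomp_def)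
qed

lemma shuffle_sign_single:
  fixes L :: "'a::{finite,linorder} set"
  assumes "b < card L"
  shows "shuffle_sign {sorted_list_of_set L ! b} (L - {sorted_list_of_set L ! b}) = (-1)^b"
proof -
  let ?x = "sorted_list_of_set L ! b"
  have "{(j, k). j \<in> {?x} \<and> k \<in> L - {?x} \<and> k < j} = (\<lambda>k. (?x, k)) ` {k \<in> L. k < ?x}"
    by auto
  then have "card {(j, k). j \<in> {?x} \<and> k \<in> L - {?x} \<and> k < j} = card {k \<in> L. k < ?x}"
    by (simp add: card_image inj_on_def)
  then show ?thesis using card_less_nth[of L b] assms by (simp add: shuffle_sign_def)
qed

lemma Fw_eq:
  fixes A :: "real^'m::{finite,linorder}^'n"
  shows "Fw A xs L = (if card L = length xs then
     det_nat (length xs) (\<lambda>a b. A $ (xs ! a) $ (sorted_list_of_set L ! b)) else 0)"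
proof (induction xs arbitrary: L)
  case Nil
  then show ?case by (simp add: Fw_def form_one_def det_nat_0)
next
  case (Cons i xs)
  let ?n = "length xs"
  have "Fw A (i # xs) L = (\<Sum>\<mu>\<in>L. shuffle_sign {\<mu>} (L - {\<mu>}) * A $ i $ \<mu> * Fw A xs (L - {\<mu>}))"
    by (simp add: Fw_def wedge_dcomp)
  also have "\<dots> = (if card L = Suc ?n then
     det_nat (Suc ?n) (\<lambda>a b. A $ ((i # xs) ! a) $ (sorted_list_of_set L ! b)) else 0)"
  proof (cases "card L = Suc ?n")
    case False
    have "\<And>\<mu>. \<mu> \<in> L \<Longrightarrow> card (L - {\<mu>}) \<noteq> ?n"
    proof -
      fix \<mu> assume "\<mu> \<in> L"
      then have "card L > 0" by (auto simp: card_gt_0_iff)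
      then show "card (L - {\<mu>}) \<noteq> ?n" using False \<open>\<mu> \<in> L\<close> by simp
    qed
    then show ?thesis using False by (simp add: Cons.IH)
  next
    case True
    let ?ls = "sorted_list_of_set L"
    have bij: "bij_betw ((!) ?ls) {..<Suc ?n} L"
      using True by (intro bij_betw_nth) auto
    have "(\<Sum>\<mu>\<in>L. shuffle_sign {\<mu>} (L - {\<mu>}) * A $ i $ \<mu> * Fw A xs (L - {\<mu>})) =
      (\<Sum>b<Suc ?n. shuffle_sign {?ls ! b} (L - {?ls ! b}) * A $ i $ (?ls ! b) * Fw A xs (L - {?ls ! b}))"
      by (rule sum.reindex_bij_betw[OF bij, symmetric])
    also have "\<dots> = (\<Sum>b<Suc ?n. (-1)^b * A $ ((i # xs) ! 0) $ (?ls ! b) *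
        det_nat ?n (\<lambda>a c. A $ ((i # xs) ! Suc a) $ (?ls ! (if c < b then c else Suc c))))"
    proof (rule sum.cong[OF refl])
      fix b assume b: "b \<in> {..<Suc ?n}"
      have "b < length ?ls" using True b by simp
      then have "?ls ! b \<in> L" using nth_mem[of b ?ls] by simp
      then have c: "card (L - {?ls ! b}) = ?n" using True
        by (simp add: card_Diff_singleton)
      have "Fw A xs (L - {?ls ! b}) =
         det_nat ?n (\<lambda>a c. A $ (xs ! a) $ (sorted_list_of_set (L - {?ls ! b}) ! c))"
        using Cons.IH c by simp
      also have "\<dots> = det_nat ?n (\<lambda>a c. A $ ((i # xs) ! Suc a) $ (?ls ! (if c < b then c else Suc c)))"
        by (rule det_nat_cong) (use True b in \<open>simp add: sorted_remove_nth\<close>)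
      finally show "shuffle_sign {?ls ! b} (L - {?ls ! b}) * A $ i $ (?ls ! b) * Fw A xs (L - {?ls ! b})
        = (-1)^b * A $ ((i # xs) ! 0) $ (?ls ! b) *
        det_nat ?n (\<lambda>a c. A $ ((i # xs) ! Suc a) $ (?ls ! (if c < b then c else Suc c)))"
        using shuffle_sign_single[of b L] True b by simp
    qed
    also have "\<dots> = det_nat (Suc ?n) (\<lambda>a b. A $ ((i # xs) ! a) $ (?ls ! b))"
      by (rule det_nat_Suc[symmetric])
    finally show ?thesis using True by simp
  qed
  finally show ?case by simp
qed

definition Rk :: "nat \<Rightarrow> ((nat \<Rightarrow> 'n::finite) \<times> (nat \<Rightarrow> 'm::finite)) set" where
  "Rk k = {(r, c). r \<in> {0..<k} \<rightarrow>\<^sub>E UNIV \<and> c \<in> {0..<k} \<rightarrow>\<^sub>E UNIV \<and>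
                  inj_on r {0..<k} \<and> inj_on c {0..<k}}"

lemma finite_Rk: "finite (Rk k :: ((nat \<Rightarrow> 'n::finite) \<times> (nat \<Rightarrow> 'm::finite)) set)"
proof -
  have "Rk k \<subseteq> ({0..<k} \<rightarrow>\<^sub>E (UNIV::'n set)) \<times> ({0..<k} \<rightarrow>\<^sub>E (UNIV::'m set))"
    by (auto simp: Rk_def)
  moreover have "finite (({0..<k} \<rightarrow>\<^sub>E (UNIV::'n set)) \<times> ({0..<k} \<rightarrow>\<^sub>E (UNIV::'m set)))"
    by (intro finite_cartesian_product finite_PiE) auto
  ultimately show ?thesis by (rule finite_subset)
qed

definition minor_abs :: "nat \<Rightarrow> real^'m^'n \<Rightarrow> (nat \<Rightarrow> 'n::finite) \<times> (nat \<Rightarrow> 'm::finite) \<Rightarrow> real" where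
  "minor_abs k A rc = \<bar>det_nat k (\<lambda>i j. A $ fst rc i $ snd rc j)\<bar>"

lemma lam_alt:
  fixes A :: "real^'m::finite^'n::finite"
  shows "lam k A = (if Rk k = ({} :: ((nat \<Rightarrow> 'n) \<times> (nat \<Rightarrow> 'm)) set) then 0 else Max (minor_abs k A ` Rk k))"
proof -
  have "{\<bar>det_nat k (\<lambda>i j. A $ r i $ c j)\<bar> | r c.
                  r \<in> {0..<k} \<rightarrow>\<^sub>E UNIV \<and> c \<in> {0..<k} \<rightarrow>\<^sub>E UNIV \<and>
                  inj_on r {0..<k} \<and> inj_on c {0..<k}} = minor_abs k A ` Rk k"
    by (auto simp: Rk_def minor_abs_def image_def)
  then show ?thesis unfolding lam_def Let_def by simp
qed

lemma lam_nonneg: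
  fixes A :: "real^'m::finite^'n::finite"
  shows "lam k A \<ge> 0"
proof -
  have "Rk k \<noteq> ({} :: ((nat \<Rightarrow> 'n) \<times> (nat \<Rightarrow> 'm)) set) \<Longrightarrow> 0 \<le> Max (minor_abs k A ` Rk k)"
  proof -
    assume "Rk k \<noteq> ({} :: ((nat \<Rightarrow> 'n) \<times> (nat \<Rightarrow> 'm)) set)"
    then obtain x where "x \<in> (Rk k :: ((nat \<Rightarrow> 'n) \<times> (nat \<Rightarrow> 'm)) set)" by auto
    then have "minor_abs k A x \<le> Max (minor_abs k A ` Rk k)" using finite_Rk[where 'n='n and 'm='m] by simp
    moreover have "0 \<le> minor_abs k A x" by (simp add: minor_abs_def)
    ultimately show ?thesis by linarith
  qed
  then show ?thesis unfolding lam_alt by auto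
qed

lemma minor_le_lam:
  fixes A :: "real^'m::finite^'n::finite"
  shows "rc \<in> Rk k \<Longrightarrow> minor_abs k A rc \<le> lam k A"
  unfolding lam_alt using finite_Rk[where 'n='n and 'm='m] by auto

lemma Fw_le_lam:
  fixes A :: "real^'m::{finite,linorder}^'n::finite"
  assumes "distinct xs"
  shows "\<bar>Fw A xs L\<bar> \<le> lam (length xs) A"
proof (cases "card L = length xs")
  case False then show ?thesis using lam_nonneg by (simp add: Fw_eq)
next
  case True
  let ?n = "length xs"
  let ?ls = "sorted_list_of_set L"
  define r where "r = restrict (\<lambda>a. xs ! a) {0..<?n}"
  define c where "c = restrict (\<lambda>b. ?ls ! b) {0..<?n}"
  have "(r, c) \<in> Rk ?n"
    unfolding Rk_def r_def c_def using assms True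
    by (auto simp: inj_on_def nth_eq_iff_index_eq)
  then have "minor_abs ?n A (r, c) \<le> lam ?n A" by (rule minor_le_lam)
  moreover have "minor_abs ?n A (r, c) = \<bar>Fw A xs L\<bar>"
    unfolding minor_abs_def Fw_eq using True
    by (simp, intro arg_cong[where f = abs] det_nat_cong) (simp add: r_def c_def)
  ultimately show ?thesis by simp
qed

lemma tendsto_Max_image:
  fixes g :: "'t \<Rightarrow> 'i \<Rightarrow> real"
  assumes "finite R" "R \<noteq> {}" "\<And>i. i \<in> R \<Longrightarrow> ((\<lambda>t. g t i) \<longlongrightarrow> g0 i) F"
  shows "((\<lambda>t. Max (g t ` R)) \<longlongrightarrow> Max (g0 ` R)) F"
  using assms
proof (induction R rule: finite_ne_induct)
  case (singleton x) then show ?case by simp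
next
  case (insert x R)
  have "((\<lambda>t. max (g t x) (Max (g t ` R))) \<longlongrightarrow> max (g0 x) (Max (g0 ` R))) F"
    using insert by (intro tendsto_max) auto
  then show ?case using insert by simp
qed

lemma measurable_Max_image:
  fixes g :: "'t \<Rightarrow> 'i \<Rightarrow> real"
  assumes "finite R" "R \<noteq> {}" "\<And>i. i \<in> R \<Longrightarrow> (\<lambda>t. g t i) \<in> borel_measurable M"
  shows "(\<lambda>t. Max (g t ` R)) \<in> borel_measurable M"
  using assms
proof (induction R rule: finite_ne_induct)
  case (singleton x) then show ?case by simp
next
  case (insert x R)
  have "(\<lambda>t. max (g t x) (Max (g t ` R))) \<in> borel_measurable M"
    using insert by (intro borel_measurable_max) auto
  then show ?case using insert by simp
qed

lemma det_nat_tendsto: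
  assumes "\<And>i j. ((\<lambda>t. M t i j) \<longlongrightarrow> M0 i j) F"
  shows "((\<lambda>t. det_nat n (M t)) \<longlongrightarrow> det_nat n M0) F"
  unfolding det_nat_def by (intro tendsto_intros assms)

lemma det_nat_measurable:
  assumes "\<And>i j. (\<lambda>t. M t i j) \<in> borel_measurable N"
  shows "(\<lambda>t. det_nat n (M t)) \<in> borel_measurable N"
  unfolding det_nat_def by (intro borel_measurable_sum borel_measurable_times borel_measurable_prod
     borel_measurable_const assms)

lemma lam_tendsto:
  fixes A :: "'t \<Rightarrow> real^'m::finite^'n::finite"
  assumes "\<And>i j. ((\<lambda>t. A t $ i $ j) \<longlongrightarrow> A0 $ i $ j) F"
  shows "((\<lambda>t. lam k (A t)) \<longlongrightarrow> lam k A0) F"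
proof (cases "Rk k = ({} :: ((nat \<Rightarrow> 'n) \<times> (nat \<Rightarrow> 'm)) set)")
  case True then show ?thesis unfolding lam_alt by simp
next
  case False
  have "((\<lambda>t. Max ((\<lambda>rc. minor_abs k (A t) rc) ` Rk k)) \<longlongrightarrow> Max ((\<lambda>rc. minor_abs k A0 rc) ` Rk k)) F"
    using False finite_Rk unfolding minor_abs_def
    by (intro tendsto_Max_image tendsto_rabs det_nat_tendsto assms) auto
  then show ?thesis using False unfolding lam_alt by simp
qed

lemma lam_measurable:
  fixes A :: "'t \<Rightarrow> real^'m::finite^'n::finite"
  assumes "\<And>i j. (\<lambda>t. A t $ i $ j) \<in> borel_measurable N"
  shows "(\<lambda>t. lam k (A t)) \<in> borel_measurable N"
proof (cases "Rk k = ({} :: ((nat \<Rightarrow> 'n) \<times> (nat \<Rightarrow> 'm)) set)")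
  case True then show ?thesis unfolding lam_alt by simp
next
  case False
  have "(\<lambda>t. Max ((\<lambda>rc. minor_abs k (A t) rc) ` Rk k)) \<in> borel_measurable N"
    using False finite_Rk unfolding minor_abs_def
    by (intro measurable_Max_image borel_measurable_abs det_nat_measurable assms) auto
  then show ?thesis using False unfolding lam_alt by simp
qed

lemma Fw_tendsto:
  fixes A :: "'t \<Rightarrow> real^'m::{finite,linorder}^'n::finite"
  assumes "\<And>i j. ((\<lambda>t. A t $ i $ j) \<longlongrightarrow> A0 $ i $ j) F"
  shows "((\<lambda>t. Fw (A t) xs L) \<longlongrightarrow> Fw A0 xs L) F"
  unfolding Fw_eq by (auto intro!: det_nat_tendsto assms)

lemma Fw_measurable:
  fixes A :: "'t \<Rightarrow> real^'m::{finite,linorder}^'n::finite"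
  assumes "\<And>i j. (\<lambda>t. A t $ i $ j) \<in> borel_measurable N"
  shows "(\<lambda>t. Fw (A t) xs L) \<in> borel_measurable N"
  unfolding Fw_eq by (cases "card L = length xs") (auto intro!: det_nat_measurable assms)



definition Psi :: "nat \<Rightarrow> (('n::{finite,linorder}) set \<Rightarrow> (real,'n) vec \<Rightarrow> real) \<Rightarrow>
   (('m::{finite,linorder}) set \<Rightarrow> (real,'m) vec \<Rightarrow> real) \<Rightarrow> (real,'n) vec \<Rightarrow> ((real,'m) vec,'n) vec \<Rightarrow> (real,'m) vec \<Rightarrow> real" where
  "Psi p a w y A x = wedge (\<lambda>L. \<Sum>I | card I = p. a I y * Fw A (sorted_list_of_set I) L)
      (hom_form (CARD('m) - p) w x) UNIV"

lemma pair_integral_Psi: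
  "pair_integral p U a w g = (LINT x:U|lebesgue. Psi p a w (g x) (wjac U g x) x)"
  unfolding pair_integral_def pullback_def Psi_def Fw_def ..

lemma Psi_tendsto:
  fixes A :: "'t \<Rightarrow> real^'m::{finite,linorder}^'n::{finite,linorder}"
  assumes "\<And>I. card I = p \<Longrightarrow> isCont (a I) y"
    and "(Y \<longlongrightarrow> y) F"
    and "\<And>i j. ((\<lambda>t. A t $ i $ j) \<longlongrightarrow> A0 $ i $ j) F"
  shows "((\<lambda>t. Psi p a w (Y t) (A t) x) \<longlongrightarrow> Psi p a w y A0 x) F"
  unfolding Psi_def wedge_def
  apply (intro tendsto_sum tendsto_mult tendsto_const Fw_tendsto assms(3))
  apply (rule isCont_tendsto_compose[OF assms(1) assms(2)])
  apply simp
  done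

lemma Psi_measurable:
  fixes A :: "(real,('m::{finite,linorder})) vec \<Rightarrow> ((real,'m) vec, ('n::{finite,linorder})) vec"
  assumes "\<And>I. card I = p \<Longrightarrow> continuous_on UNIV (a I)"
    and "Y \<in> borel_measurable N"
    and "\<And>i j. (\<lambda>t. A t $ i $ j) \<in> borel_measurable N"
    and "\<And>K. card K = CARD('m) - p \<Longrightarrow> w K \<in> borel_measurable N"
  shows "(\<lambda>t. Psi p a w (Y t) (A t) t) \<in> borel_measurable N"
  unfolding Psi_def wedge_def
proof (intro borel_measurable_sum borel_measurable_times borel_measurable_const Fw_measurable assms(3))
  fix I :: "'n set" assume "I \<in> {I. card I = p}"
  then have "a I \<in> borel_measurable borel"
    using assms(1) by (intro borel_measurable_continuous_onI) auto
  then show "(\<lambda>t. a I (Y t)) \<in> borel_measurable N"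
    using assms(2) by (rule measurable_compose[rotated])
next
  fix J :: "'m set"
  show "(\<lambda>t. hom_form (CARD('m) - p) w t (UNIV - J)) \<in> borel_measurable N"
    using assms(4) by (cases "card (UNIV - J) = CARD('m) - p") (auto simp: hom_form_def)
qed

lemma Psi_bound:
  fixes A :: "real^'m::{finite,linorder}^'n::{finite,linorder}"
  assumes "\<And>I. card I = p \<Longrightarrow> \<bar>a I y\<bar> \<le> Ba"
    and "\<And>K. card K = CARD('m) - p \<Longrightarrow> \<bar>w K x\<bar> \<le> Bw"
    and "0 \<le> Bw"
  shows "\<bar>Psi p a w y A x\<bar> \<le>
     real (card {J::'m set. J \<subseteq> UNIV}) * (real (card {I::'n set. card I = p}) * (Ba * lam p A)) * Bw"
proof -
  let ?P = "\<lambda>L. \<Sum>I | card I = p. a I y * Fw A (sorted_list_of_set I) L"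
  let ?H = "hom_form (CARD('m) - p) w x"
  have P: "\<bar>?P L\<bar> \<le> real (card {I::'n set. card I = p}) * (Ba * lam p A)" for L
  proof -
    have "\<bar>?P L\<bar> \<le> (\<Sum>I | card I = p. \<bar>a I y * Fw A (sorted_list_of_set I) L\<bar>)"
      by (rule sum_abs)
    also have "\<dots> \<le> (\<Sum>I::'n set | card I = p. Ba * lam p A)"
    proof (intro sum_mono)
      fix I :: "'n set" assume I: "I \<in> {I. card I = p}"
      have "\<bar>Fw A (sorted_list_of_set I) L\<bar> \<le> lam (length (sorted_list_of_set I)) A"
        by (rule Fw_le_lam) simp
      then have "\<bar>Fw A (sorted_list_of_set I) L\<bar> \<le> lam p A" using I by simp
      then show "\<bar>a I y * Fw A (sorted_list_of_set I) L\<bar> \<le> Ba * lam p A"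
        unfolding abs_mult using assms(1) I
        by (intro mult_mono) (auto intro: order_trans[OF abs_ge_zero])
    qed
    also have "\<dots> = real (card {I::'n set. card I = p}) * (Ba * lam p A)" by simp
    finally show ?thesis .
  qed
  have H: "\<bar>?H K\<bar> \<le> Bw" for K
    using assms(2,3) by (auto simp: hom_form_def)
  have "\<bar>Psi p a w y A x\<bar> \<le> (\<Sum>J | J \<subseteq> UNIV. \<bar>shuffle_sign J (UNIV - J) * ?P J * ?H (UNIV - J)\<bar>)"
    unfolding Psi_def wedge_def by (rule sum_abs)
  also have "\<dots> \<le> (\<Sum>J | J \<subseteq> (UNIV::'m set). real (card {I::'n set. card I = p}) * (Ba * lam p A) * Bw)"
  proof (intro sum_mono)
    fix J :: "'m set"
    have "\<bar>shuffle_sign J (UNIV - J)\<bar> = 1" by (simp add: shuffle_sign_def)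
    then show "\<bar>shuffle_sign J (UNIV - J) * ?P J * ?H (UNIV - J)\<bar> \<le>
        real (card {I::'n set. card I = p}) * (Ba * lam p A) * Bw"
      unfolding abs_mult using P[of J] H[of "UNIV - J"]
      by (simp, intro mult_mono) (auto intro: order_trans[OF abs_ge_zero])
  qed
  also have "\<dots> = real (card {J::'m set. J \<subseteq> UNIV}) * (real (card {I::'n set. card I = p}) * (Ba * lam p A)) * Bw"
    by simp
  finally show ?thesis .
qed



lemma open_sets_lebesgue: "open U \<Longrightarrow> U \<in> sets lebesgue"
  using borel_open[of U] by (metis sets_completionI_sets sets_lborel)

lemma set_integrable_iff_on:
  fixes U :: "'a::euclidean_space set" and g :: "'a \<Rightarrow> real"
  assumes U: "U \<in> sets lebesgue"
  shows "set_integrable lebesgue U g \<longleftrightarrow> integrable (lebesgue_on U) g"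
proof -
  from U have "U \<inter> space lebesgue \<in> sets lebesgue" by simp
  note X = integrable_restrict_space[OF this, of g]
  show ?thesis unfolding set_integrable_def using X by simp
qed

lemma set_integral_eq_on:
  fixes U :: "'a::euclidean_space set" and g :: "'a \<Rightarrow> real"
  assumes U: "U \<in> sets lebesgue"
  shows "(LINT x:U|lebesgue. g x) = integral\<^sup>L (lebesgue_on U) g"
proof -
  from U have "U \<inter> space lebesgue \<in> sets lebesgue" by simp
  note X = integral_restrict_space[OF this, of g]
  show ?thesis unfolding set_lebesgue_integral_def using X by simp
qed

lemma set_nn_integral_eq_on:
  "U \<in> sets lebesgue \<Longrightarrow> (\<integral>\<^sup>+ x \<in> U. g x \<partial>lebesgue) = integral\<^sup>N (lebesgue_on U) g"
  by (subst nn_integral_restrict_space) auto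

lemma wjac_weak: "W11 U g \<Longrightarrow> weak_jacobian U g (wjac U g)"
  unfolding W11_def wjac_def by (metis someI)

lemma vec_measurable:
  fixes f :: "'a \<Rightarrow> ('b::euclidean_space)^'n"
  assumes "\<And>i. (\<lambda>x. f x $ i) \<in> borel_measurable M"
  shows "f \<in> borel_measurable M"
  unfolding borel_measurable_euclidean_space[where f=f]
  by (auto simp: Basis_vec_def inner_axis intro!: borel_measurable_inner assms)

lemma W11_facts:
  assumes "U \<in> sets lebesgue" "W11 U g"
  shows "\<And>\<nu>. integrable (lebesgue_on U) (\<lambda>x. g x $ \<nu>)"
    "\<And>\<nu> \<mu>. integrable (lebesgue_on U) (\<lambda>x. wjac U g x $ \<nu> $ \<mu>)"
    "\<And>\<nu> \<mu>. (\<lambda>x. wjac U g x $ \<nu> $ \<mu>) \<in> borel_measurable (lebesgue_on U)"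
    "g \<in> borel_measurable (lebesgue_on U)"
    "wjac U g \<in> borel_measurable (lebesgue_on U)"
proof -
  have W: "weak_jacobian U g (wjac U g)" using assms(2) by (rule wjac_weak)
  show i1: "\<And>\<nu>. integrable (lebesgue_on U) (\<lambda>x. g x $ \<nu>)"
    using W assms(1) by (simp add: weak_jacobian_def set_integrable_iff_on)
  show i2: "\<And>\<nu> \<mu>. integrable (lebesgue_on U) (\<lambda>x. wjac U g x $ \<nu> $ \<mu>)"
    using W assms(1) by (simp add: weak_jacobian_def set_integrable_iff_on)
  show m2: "\<And>\<nu> \<mu>. (\<lambda>x. wjac U g x $ \<nu> $ \<mu>) \<in> borel_measurable (lebesgue_on U)"
    using i2 by auto
  show "g \<in> borel_measurable (lebesgue_on U)"
    using i1 by (intro vec_measurable) auto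
  show "wjac U g \<in> borel_measurable (lebesgue_on U)"
    using m2 by (intro vec_measurable) auto
qed

lemma C1c_facts:
  assumes "C1c_on U g"
  shows "continuous_on U g" "\<exists>B\<ge>0. \<forall>x\<in>U. \<bar>g x\<bar> \<le> B"
proof -
  obtain D where D: "\<forall>x\<in>U. (g has_derivative blinfun_apply (D x)) (at x)"
    using assms unfolding C1c_on_def C1_on_def by blast
  show c: "continuous_on U g"
    using D by (intro continuous_at_imp_continuous_on) (auto intro: has_derivative_continuous)
  obtain K where K: "compact K" "K \<subseteq> U" "\<forall>x\<in>U - K. g x = 0"
    using assms unfolding C1c_on_def by blast
  have "compact (g ` K)" using K c by (intro compact_continuous_image continuous_on_subset[OF c])
  then obtain B where B: "\<forall>y\<in>g ` K. norm y \<le> B" using compact_imp_bounded bounded_iff by metis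
  show "\<exists>B\<ge>0. \<forall>x\<in>U. \<bar>g x\<bar> \<le> B"
  proof (intro exI[of _ "\<bar>B\<bar>"] conjI ballI)
    fix x assume "x \<in> U"
    then show "\<bar>g x\<bar> \<le> \<bar>B\<bar>" using B K by (cases "x \<in> K") auto
  qed simp
qed

lemma tau_lemma:
  fixes U :: "((real, 'm::{finite,linorder}) vec) set"
    and f :: "(real, 'm) vec \<Rightarrow> (real, 'n::{finite,linorder}) vec"
    and fs :: "nat \<Rightarrow> (real, 'm) vec \<Rightarrow> (real, 'n) vec"
  assumes U: "U \<in> sets lebesgue"
    and W: "W11_conv U fs f"
    and G: "integrable (lebesgue_on U) G"
    and dom: "AE x in lebesgue_on U. \<forall>j. lam p (wjac U (fs j) x) \<le> G x"
    and cy: "AE x in lebesgue_on U. (\<lambda>j. fs j x) \<longlonglongrightarrow> f x"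
    and cD: "AE x in lebesgue_on U. \<forall>\<nu> \<mu>. (\<lambda>j. wjac U (fs j) x $ \<nu> $ \<mu>) \<longlonglongrightarrow> wjac U f x $ \<nu> $ \<mu>"
  shows "tau_conv p U fs f"
proof -
  let ?M = "lebesgue_on U"
  have Wf: "W11 U f" and Wj: "\<And>j. W11 U (fs j)" using W by (auto simp: W11_conv_def)
  note Ff = W11_facts[OF U Wf]
  note Fj = W11_facts[OF U Wj]
  have lamj_meas: "\<And>j. (\<lambda>x. lam p (wjac U (fs j) x)) \<in> borel_measurable ?M"
    by (rule lam_measurable) (rule Fj(3))
  have lamf_meas: "(\<lambda>x. lam p (wjac U f x)) \<in> borel_measurable ?M"
    by (rule lam_measurable) (rule Ff(3))
  have Fkj: "Fk p U (fs j)" for j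
  proof -
    have "integrable ?M (\<lambda>x. lam p (wjac U (fs j) x))"
    proof (rule Bochner_Integration.integrable_bound[OF G lamj_meas])
      show "AE x in ?M. norm (lam p (wjac U (fs j) x)) \<le> norm (G x)"
        using dom
      proof eventually_elim
        case (elim x)
        then have "lam p (wjac U (fs j) x) \<le> G x" by blast
        then show ?case using lam_nonneg[of p "wjac U (fs j) x"] by simp
      qed
    qed
    then show ?thesis using Wj U by (simp add: Fk_def set_integrable_iff_on)
  qed
  have domf: "AE x in ?M. lam p (wjac U f x) \<le> G x"
    using dom cD
  proof eventually_elim
    case (elim x)
    have "(\<lambda>j. lam p (wjac U (fs j) x)) \<longlonglongrightarrow> lam p (wjac U f x)"
      using elim(2) by (intro lam_tendsto) auto
    then show ?case using elim(1) by (intro LIMSEQ_le_const2) auto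
  qed
  have Fkf: "Fk p U f"
  proof -
    have "integrable ?M (\<lambda>x. lam p (wjac U f x))"
    proof (rule Bochner_Integration.integrable_bound[OF G lamf_meas])
      show "AE x in ?M. norm (lam p (wjac U f x)) \<le> norm (G x)"
        using domf
      proof eventually_elim
        case (elim x)
        then show ?case using lam_nonneg[of p "wjac U f x"] by simp
      qed
    qed
    then show ?thesis using Wf U by (simp add: Fk_def set_integrable_iff_on)
  qed
  have inU: "AE x in ?M. x \<in> U"
    by (rule AE_I2) (simp add: space_restrict_space)
  have conv: "(\<lambda>j. pair_integral p U a w (fs j)) \<longlonglongrightarrow> pair_integral p U a w f"
    if a: "C1b_form p a" and w: "C10_form (CARD('m) - p) U w" for a w
  proof -
    have acont: "continuous_on UNIV (a I)" if "card I = p" for I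
    proof -
      from a that obtain D where "\<forall>y. (a I has_derivative blinfun_apply (D y)) (at y)"
        unfolding C1b_form_def by blast
      then show ?thesis
        by (intro continuous_at_imp_continuous_on) (auto intro: has_derivative_continuous)
    qed
    have "\<forall>I\<in>{I. card I = p}. \<exists>B. \<forall>y. \<bar>a I y\<bar> \<le> B"
    proof
      fix I :: "'n set" assume "I \<in> {I. card I = p}"
      then have "bounded (range (a I))" using a unfolding C1b_form_def by auto
      then obtain B where "\<forall>z\<in>range (a I). norm z \<le> B" unfolding bounded_iff by blast
      then show "\<exists>B. \<forall>y. \<bar>a I y\<bar> \<le> B" by auto
    qed
    then obtain Bf where Bf: "\<forall>I\<in>{I. card I = p}. \<forall>y. \<bar>a I y\<bar> \<le> Bf I"
      by (metis bchoice)
    define Ba where "Ba = (\<Sum>I\<in>{I::'n set. card I = p}. \<bar>Bf I\<bar>)"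
    have Ba: "\<bar>a I y\<bar> \<le> Ba" if "card I = p" for I y
    proof -
      have "\<bar>a I y\<bar> \<le> Bf I" using Bf that by blast
      then have "\<bar>a I y\<bar> \<le> \<bar>Bf I\<bar>" by linarith
      also have "\<dots> \<le> Ba" unfolding Ba_def using that
        by (intro member_le_sum) auto
      finally show ?thesis .
    qed
    have wK: "continuous_on U (w K) \<and> (\<exists>B\<ge>0. \<forall>x\<in>U. \<bar>w K x\<bar> \<le> B)"
      if "card K = CARD('m) - p" for K
      using w that C1c_facts[of U "w K"] unfolding C10_form_def by blast
    have "\<forall>K\<in>{K. card K = CARD('m) - p}. \<exists>B. B \<ge> 0 \<and> (\<forall>x\<in>U. \<bar>w K x\<bar> \<le> B)"
      using wK by blast
    then obtain Bwf where Bwf: "\<forall>K\<in>{K. card K = CARD('m) - p}. Bwf K \<ge> 0 \<and> (\<forall>x\<in>U. \<bar>w K x\<bar> \<le> Bwf K)"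
      by (metis bchoice)
    define Bw where "Bw = (\<Sum>K\<in>{K::'m set. card K = CARD('m) - p}. Bwf K)"
    have Bw0: "0 \<le> Bw" unfolding Bw_def using Bwf by (intro sum_nonneg) auto
    have Bw: "\<bar>w K x\<bar> \<le> Bw" if "card K = CARD('m) - p" "x \<in> U" for K x
    proof -
      have "\<bar>w K x\<bar> \<le> Bwf K" using Bwf that by blast
      also have "\<dots> \<le> Bw" unfolding Bw_def using that Bwf
        by (intro member_le_sum) auto
      finally show ?thesis .
    qed
    have wmeas: "w K \<in> borel_measurable ?M" if "card K = CARD('m) - p" for K
      using wK[OF that] U by (intro continuous_imp_measurable_on_sets_lebesgue) auto
    define C where "C = real (card {J::'m set. J \<subseteq> UNIV}) * real (card {I::'n set. card I = p}) * Ba * Bw"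
    have Ba0: "0 \<le> Ba" unfolding Ba_def by (intro sum_nonneg) auto
    have C0: "0 \<le> C" unfolding C_def using Ba0 Bw0 by simp
    have lim: "(\<lambda>j. integral\<^sup>L ?M (\<lambda>x. Psi p a w (fs j x) (wjac U (fs j) x) x))
       \<longlonglongrightarrow> integral\<^sup>L ?M (\<lambda>x. Psi p a w (f x) (wjac U f x) x)"
    proof (rule integral_dominated_convergence[where w = "\<lambda>x. C * G x"])
      show "(\<lambda>x. Psi p a w (f x) (wjac U f x) x) \<in> borel_measurable ?M"
        by (rule Psi_measurable[OF acont Ff(4) Ff(3) wmeas])
      show "\<And>j. (\<lambda>x. Psi p a w (fs j x) (wjac U (fs j) x) x) \<in> borel_measurable ?M"
        by (rule Psi_measurable[OF acont Fj(4) Fj(3) wmeas])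
      show "integrable ?M (\<lambda>x. C * G x)" using G by simp
      show "AE x in ?M. (\<lambda>j. Psi p a w (fs j x) (wjac U (fs j) x) x) \<longlonglongrightarrow> Psi p a w (f x) (wjac U f x) x"
        using cy cD
      proof eventually_elim
        case (elim x)
        show ?case
          using elim acont by (intro Psi_tendsto) (auto simp: continuous_on_eq_continuous_at)
      qed
      fix j
      show "AE x in ?M. norm (Psi p a w (fs j x) (wjac U (fs j) x) x) \<le> C * G x"
        using dom inU
      proof eventually_elim
        case (elim x)
        have "\<bar>Psi p a w (fs j x) (wjac U (fs j) x) x\<bar> \<le>
          real (card {J::'m set. J \<subseteq> UNIV}) * (real (card {I::'n set. card I = p}) * (Ba * lam p (wjac U (fs j) x))) * Bw"
          using Ba Bw elim(2) Bw0 by (intro Psi_bound) auto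
        also have "\<dots> = C * lam p (wjac U (fs j) x)" unfolding C_def by (simp add: algebra_simps)
        also have "\<dots> \<le> C * G x" using elim(1) C0 by (intro mult_left_mono) auto
        finally show ?case by simp
      qed
    qed
    then show ?thesis unfolding pair_integral_Psi set_integral_eq_on[OF U] .
  qed
  show ?thesis unfolding tau_conv_def using Fkf Fkj W conv by blast
qed

lemma norm_mat_le:
  fixes A :: "real^'m::finite^'n::finite"
  shows "norm A \<le> (\<Sum>\<nu>\<in>UNIV. \<Sum>\<mu>\<in>UNIV. \<bar>A $ \<nu> $ \<mu>\<bar>)"
proof -
  have "norm A \<le> (\<Sum>\<nu>\<in>UNIV. norm (A $ \<nu>))" unfolding norm_vec_def by (rule L2_set_le_sum) simp
  also have "\<dots> \<le> (\<Sum>\<nu>\<in>UNIV. \<Sum>\<mu>\<in>UNIV. \<bar>A $ \<nu> $ \<mu>\<bar>)" by (intro sum_mono norm_le_l1_cart)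
  finally show ?thesis .
qed

lemma entry_le_norm:
  fixes A :: "real^'m::finite^'n::finite"
  shows "\<bar>A $ \<nu> $ \<mu>\<bar> \<le> norm A"
  using component_le_norm_cart[of "A $ \<nu>" \<mu>] Finite_Cartesian_Product.norm_nth_le[of A \<nu>] by linarith

theorem mainTheorem7:
  fixes U :: "((real, 'm::{finite,linorder}) vec) set"
    and f :: "(real, 'm) vec \<Rightarrow> (real, 'n::{finite,linorder}) vec"
    and k :: nat
  assumes "open U" and "connected U" and "bounded U"
    and "k < CARD('n)"
    and "W11 U f"
    and "(INF fs \<in> {fs. (\<forall>j. C1_on U (fs j)) \<and> W11_conv U fs f}.
           (\<integral>\<^sup>+ x \<in> U. (SUP j. ennreal (lam k (wjac U (fs j) x) + lam (Suc k) (wjac U (fs j) x))) \<partial>lebesgue))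
         < \<infinity>"
  shows "dagger_stable k U f"
proof -
  have U: "U \<in> sets lebesgue" using assms(1) by (rule open_sets_lebesgue)
  let ?M = "lebesgue_on U"
  obtain fs0 where fs0C: "\<And>j. C1_on U (fs0 j)" and fs0W: "W11_conv U fs0 f"
    and fin: "(\<integral>\<^sup>+ x \<in> U. (SUP j. ennreal (lam k (wjac U (fs0 j) x) + lam (Suc k) (wjac U (fs0 j) x))) \<partial>lebesgue) < \<infinity>"
    using assms(6) unfolding INF_less_iff by blast
  define S where "S x = (SUP j. ennreal (lam k (wjac U (fs0 j) x) + lam (Suc k) (wjac U (fs0 j) x)))" for x
  have Wf: "W11 U f" and Wj0: "\<And>j. W11 U (fs0 j)" using fs0W by (auto simp: W11_conv_def)
  note Ff = W11_facts[OF U Wf]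
  note Fj0 = W11_facts[OF U Wj0]
  have Smeas: "S \<in> borel_measurable ?M"
    unfolding S_def
  proof (rule borel_measurable_SUP)
    fix j
    have "(\<lambda>x. lam k (wjac U (fs0 j) x) + lam (Suc k) (wjac U (fs0 j) x)) \<in> borel_measurable ?M"
      by (intro borel_measurable_add lam_measurable Fj0(3))
    then show "(\<lambda>x. ennreal (lam k (wjac U (fs0 j) x) + lam (Suc k) (wjac U (fs0 j) x))) \<in> borel_measurable ?M"
      by (rule measurable_compose[OF _ measurable_ennreal])
  qed simp
  have Sfin: "integral\<^sup>N ?M S < \<infinity>" using fin unfolding S_def set_nn_integral_eq_on[OF U] .
  define G where "G x = enn2real (S x)" for x
  have G: "integrable ?M G"
  proof (rule integrableI_bounded)
    show "G \<in> borel_measurable ?M" unfolding G_def using Smeas by (rule borel_measurable_enn2real)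
    have "(\<integral>\<^sup>+ x. ennreal (norm (G x)) \<partial>?M) \<le> integral\<^sup>N ?M S"
      by (intro nn_integral_mono) (simp add: G_def ennreal_enn2real_if)
    then show "(\<integral>\<^sup>+ x. ennreal (norm (G x)) \<partial>?M) < \<infinity>" using Sfin by (rule le_less_trans)
  qed
  have Sae: "AE x in ?M. S x \<noteq> \<infinity>"
    using nn_integral_noteq_infinite[OF Smeas] Sfin by simp
  define h where "h j x = norm (fs0 j x - f x) + norm (wjac U (fs0 j) x - wjac U f x)" for j x
  have hnn: "0 \<le> h j x" for j x unfolding h_def by simp
  have hint: "integrable ?M (h j)" for j
  proof (rule Bochner_Integration.integrable_bound)
    show "integrable ?M (\<lambda>x. (\<Sum>\<nu>\<in>UNIV. \<bar>fs0 j x $ \<nu> - f x $ \<nu>\<bar>) +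
        (\<Sum>\<nu>\<in>UNIV. \<Sum>\<mu>\<in>UNIV. \<bar>wjac U (fs0 j) x $ \<nu> $ \<mu> - wjac U f x $ \<nu> $ \<mu>\<bar>))"
      using Ff Fj0 by (intro Bochner_Integration.integrable_add integrable_sum integrable_abs
          Bochner_Integration.integrable_diff) auto
    show "h j \<in> borel_measurable ?M" unfolding h_def using Ff Fj0
      by (intro borel_measurable_add borel_measurable_norm borel_measurable_diff) auto
    show "AE x in ?M. norm (h j x) \<le> norm ((\<Sum>\<nu>\<in>UNIV. \<bar>fs0 j x $ \<nu> - f x $ \<nu>\<bar>) +
        (\<Sum>\<nu>\<in>UNIV. \<Sum>\<mu>\<in>UNIV. \<bar>wjac U (fs0 j) x $ \<nu> $ \<mu> - wjac U f x $ \<nu> $ \<mu>\<bar>))"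
    proof (rule AE_I2)
      fix x
      have 1: "norm (fs0 j x - f x) \<le> (\<Sum>\<nu>\<in>UNIV. \<bar>fs0 j x $ \<nu> - f x $ \<nu>\<bar>)"
        using norm_le_l1_cart[of "fs0 j x - f x"] by simp
      have 2: "norm (wjac U (fs0 j) x - wjac U f x) \<le>
          (\<Sum>\<nu>\<in>UNIV. \<Sum>\<mu>\<in>UNIV. \<bar>wjac U (fs0 j) x $ \<nu> $ \<mu> - wjac U f x $ \<nu> $ \<mu>\<bar>)"
        using norm_mat_le[of "wjac U (fs0 j) x - wjac U f x"] by simp
      have "0 \<le> (\<Sum>\<nu>\<in>UNIV. \<bar>fs0 j x $ \<nu> - f x $ \<nu>\<bar>) +
        (\<Sum>\<nu>\<in>UNIV. \<Sum>\<mu>\<in>UNIV. \<bar>wjac U (fs0 j) x $ \<nu> $ \<mu> - wjac U f x $ \<nu> $ \<mu>\<bar>)"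
        by (intro add_nonneg_nonneg sum_nonneg) auto
      then show "norm (h j x) \<le> norm ((\<Sum>\<nu>\<in>UNIV. \<bar>fs0 j x $ \<nu> - f x $ \<nu>\<bar>) +
        (\<Sum>\<nu>\<in>UNIV. \<Sum>\<mu>\<in>UNIV. \<bar>wjac U (fs0 j) x $ \<nu> $ \<mu> - wjac U f x $ \<nu> $ \<mu>\<bar>))"
        using 1 2 hnn[of j x] unfolding h_def by simp
    qed
  qed
  have hlim: "(\<lambda>j. integral\<^sup>L ?M (h j)) \<longlonglongrightarrow> 0"
    using fs0W unfolding W11_conv_def h_def set_integral_eq_on[OF U] by simp
  have hlim': "(\<lambda>j. \<integral>x. norm (h j x) \<partial>?M) \<longlonglongrightarrow> 0"
    using hlim hnn by simp
  obtain r :: "nat \<Rightarrow> nat" where r: "strict_mono r" and rae: "AE x in ?M. (\<lambda>j. h (r j) x) \<longlonglongrightarrow> 0"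
    using tendsto_L1_AE_subseq[OF hint hlim'] by blast
  define fs where "fs j = fs0 (r j)" for j
  have W: "W11_conv U fs f"
  proof -
    have "(\<lambda>j. integral\<^sup>L ?M (h (r j))) \<longlonglongrightarrow> 0"
      using LIMSEQ_subseq_LIMSEQ[OF hlim r] by (simp add: o_def)
    then show ?thesis using Wf Wj0 unfolding W11_conv_def fs_def h_def set_integral_eq_on[OF U]
      by simp
  qed
  have cy: "AE x in ?M. (\<lambda>j. fs j x) \<longlonglongrightarrow> f x"
    using rae
  proof eventually_elim
    case (elim x)
    have "(\<lambda>j. fs j x - f x) \<longlonglongrightarrow> 0"
    proof (rule Lim_null_comparison[OF _ elim])
      show "\<forall>\<^sub>F j in sequentially. norm (fs j x - f x) \<le> h (r j) x"
        by (intro always_eventually allI) (simp add: h_def fs_def)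
    qed
    then show ?case by (rule LIM_zero_cancel)
  qed
  have cD: "AE x in ?M. \<forall>\<nu> \<mu>. (\<lambda>j. wjac U (fs j) x $ \<nu> $ \<mu>) \<longlonglongrightarrow> wjac U f x $ \<nu> $ \<mu>"
    using rae
  proof eventually_elim
    case (elim x)
    show ?case
    proof (intro allI)
      fix \<nu> \<mu>
      have "(\<lambda>j. wjac U (fs j) x $ \<nu> $ \<mu> - wjac U f x $ \<nu> $ \<mu>) \<longlonglongrightarrow> 0"
      proof (rule Lim_null_comparison[OF _ elim])
        show "\<forall>\<^sub>F j in sequentially. norm (wjac U (fs j) x $ \<nu> $ \<mu> - wjac U f x $ \<nu> $ \<mu>) \<le> h (r j) x"
        proof (intro always_eventually allI)
          fix j
          have "\<bar>wjac U (fs j) x $ \<nu> $ \<mu> - wjac U f x $ \<nu> $ \<mu>\<bar> \<le> norm (wjac U (fs j) x - wjac U f x)"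
            using entry_le_norm[of "wjac U (fs j) x - wjac U f x" \<nu> \<mu>] by simp
          moreover have "0 \<le> norm (fs j x - f x)" by (rule norm_ge_zero)
          ultimately show "norm (wjac U (fs j) x $ \<nu> $ \<mu> - wjac U f x $ \<nu> $ \<mu>) \<le> h (r j) x"
            unfolding h_def fs_def real_norm_def by linarith
        qed
      qed
      then show "(\<lambda>j. wjac U (fs j) x $ \<nu> $ \<mu>) \<longlonglongrightarrow> wjac U f x $ \<nu> $ \<mu>" by (rule LIM_zero_cancel)
    qed
  qed
  have dom: "AE x in ?M. \<forall>j. lam k (wjac U (fs j) x) \<le> G x \<and> lam (Suc k) (wjac U (fs j) x) \<le> G x"
    using Sae
  proof eventually_elim
    case (elim x)
    show ?case
    proof (intro allI)
      fix j
      let ?v = "lam k (wjac U (fs j) x) + lam (Suc k) (wjac U (fs j) x)"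
      have nn: "0 \<le> lam k (wjac U (fs j) x)" "0 \<le> lam (Suc k) (wjac U (fs j) x)" by (rule lam_nonneg)+
      have "ennreal ?v \<le> S x" unfolding S_def fs_def by (rule SUP_upper) simp
      then have "enn2real (ennreal ?v) \<le> enn2real (S x)"
        using elim by (intro enn2real_mono) (auto simp: top.not_eq_extremum)
      moreover have "enn2real (ennreal ?v) = ?v" by (rule enn2real_ennreal) (use nn in linarith)
      ultimately have "?v \<le> G x" unfolding G_def by linarith
      then show "lam k (wjac U (fs j) x) \<le> G x \<and> lam (Suc k) (wjac U (fs j) x) \<le> G x"
        using nn by linarith
    qed
  qed
  have dom1: "AE x in ?M. \<forall>j. lam k (wjac U (fs j) x) \<le> G x" using dom by eventually_elim blast
  have dom2: "AE x in ?M. \<forall>j. lam (Suc k) (wjac U (fs j) x) \<le> G x" using dom by eventually_elim blast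
  have T1: "tau_conv k U fs f" by (rule tau_lemma[OF U W G dom1 cy cD])
  have T2: "tau_conv (Suc k) U fs f" by (rule tau_lemma[OF U W G dom2 cy cD])
  have C: "\<forall>j. C1_on U (fs j)" using fs0C by (simp add: fs_def)
  have Fks: "\<forall>j. Fk k U (fs j) \<and> Fk (Suc k) U (fs j)" "Fk k U f" "Fk (Suc k) U f"
    using T1 T2 unfolding tau_conv_def by blast+
  have ex: "\<exists>fs. (\<forall>j. C1_on U (fs j) \<and> Fk k U (fs j) \<and> Fk (Suc k) U (fs j)) \<and>
              tau_conv k U fs f \<and> tau_conv (Suc k) U fs f"
    using C Fks(1) T1 T2 by blast
  show ?thesis unfolding dagger_stable_def using assms(4) Fks(2,3) ex by simp
qed

end
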